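(* Let $\mathcal{A}=(Q,\Sigma,\delta)$ be a DFA with $Q=\{1,\dots,n\}$. Fix positive integers $d_1,d_2$ and non-empty sets of words $W_1\subseteq\Sigma^{\le d_1}$, $W_2\subseteq\Sigma^{\le d_2}$. Let $R=\{q.w\mid q\in Q,\ w\in W_1\}$ and let $\mathcal{B}=\mathcal{A}_c(W_1,W_2)=(R,W_2W_1,\delta_{\mathcal{B}})$ be the DFA with state set $R$, whose alphabet is the finite set $W_2W_1=\{w_2w_1\mid w_2\in W_2,w_1\in W_1\}$ (each such word treated as a single letter), and $\delta_{\mathcal{B}}(q,w)=q.w$. Let $P_1,P_2$ be positive probability distributions on $W_1,W_2$, put $[P_i]=\sum_{w\in W_i}P_i(w)[w]$, and let $\alpha\in V_R$ be a stochastic vector (non-negative entries summing to $1$, supported on $R$) with $\alpha[P_2][P_1]=\alpha$. Suppose that $W_2W_1$ is complete for $V_R$ with respect to $\alpha$, and that $w_0\in\Sigma^*$ satisfies $Q.w_0=R$. Then: (1) for every $x\in V_R\setminus\langle [R]\rangle$ there exists $w\in W_2W_1$ with $(x,\alpha[w])>(x,\alpha)$; (2) $\mathcal{B}$ is synchronizing and $\mathrm{rt}(\mathcal{B})\le \mathrm{DS}(\alpha)-1$; (3) $\mathcal{A}$ is synchronizing, and $\mathrm{rt}(\mathcal{A})\le |w_0|+\mathrm{rt}(\mathcal{B})(d_1+d_2)\le |w_0|+(\mathrm{DS}(\alpha)-1)(d_1+d_2)$ if $R\ne Q$, while $\mathrm{rt}(\mathcal{A})\le 1+(\mathrm{DS}(\alpha)-2)(d_1+d_2)$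 if $R=Q$.
   Context: A DFA $\mathcal{A}=(Q,\Sigma,\delta)$ has a finite non-empty state set $Q$, finite non-empty alphabet $\Sigma$ and total transition function $\delta:Q\times\Sigma\to Q$, extended to words; $q.w=\delta(q,w)$ and $S.w=\{q.w\mid q\in S\}$. $\Sigma^{\le c}$ is the set of words of length at most $c$. A reset word is a word $w$ with $|Q.w|=1$; $\mathcal{A}$ is synchronizing if it has one, and $\mathrm{rt}(\mathcal{A})$ (reset threshold) is the length of a shortest reset word. With $Q=\{1,\dots,n\}$, vectors in $\mathbb{R}^n$ are row vectors; $[K]\in\mathbb{R}^n$ is the characteristic vector of $K\subseteq Q$ and $[q]=[\{q\}]$. For a word $w$, $[w]$ is the $n\times n$ 0-1 matrix with $[w]_{p,q}=1$ iff $p.w=q$, so $[uv]=[u][v]$. $(\cdot,\cdot)$ is the standard inner product, $\langle\cdot\rangle$ linear span. For $S\subseteq Q$, $V_S=\langle [p]\mid p\in S\rangle$. A set of words $W$ is complete for a subspace $V\le\mathbb{R}^n$ with respect to $g\in V$ if $\langle g[w]\mid w\in W\rangle=V$. For a non-negative vector $g\in\mathbb{R}^n$, $\mathrm{DS}(g)=|\{(g,z)\mid z\in\{0,1\}^n\}|-1$ (the number of distinct positive subset sums of entries of $g$). *)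

theory Defs
  imports "HOL-Analysis.Analysis"
begin

definition run :: "('q \<Rightarrow> 'a \<Rightarrow> 'q) \<Rightarrow> 'q \<Rightarrow> 'a list \<Rightarrow> 'q" where
  "run \<delta> q w = foldl \<delta> q w"

definition is_reset_word :: "'q set \<Rightarrow> 'a set \<Rightarrow> ('q \<Rightarrow> 'a \<Rightarrow> 'q) \<Rightarrow> 'a list \<Rightarrow> bool" where
  "is_reset_word Q \<Sigma> \<delta> w \<longleftrightarrow> set w \<subseteq> \<Sigma> \<and> card ((\<lambda>q. run \<delta> q w) ` Q) = 1"

definition synchronizing :: "'q set \<Rightarrow> 'a set \<Rightarrow> ('q \<Rightarrow> 'a \<Rightarrow> 'q) \<Rightarrow> bool" where
  "synchronizing Q \<Sigma> \<delta> \<longleftrightarrow> (\<exists>w. is_reset_word Q \<Sigma> \<delta> w)"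

definition reset_threshold :: "'q set \<Rightarrow> 'a set \<Rightarrow> ('q \<Rightarrow> 'a \<Rightarrow> 'q) \<Rightarrow> nat" where
  "reset_threshold Q \<Sigma> \<delta> = (LEAST k. \<exists>w. is_reset_word Q \<Sigma> \<delta> w \<and> length w = k)"

definition words_upto :: "'a set \<Rightarrow> nat \<Rightarrow> 'a list set" where
  "words_upto \<Sigma> c = {w. set w \<subseteq> \<Sigma> \<and> length w \<le> c}"

definition word_concat :: "'a list set \<Rightarrow> 'a list set \<Rightarrow> 'a list set" where
  "word_concat W2 W1 = {w2 @ w1 | w2 w1. w2 \<in> W2 \<and> w1 \<in> W1}"

text \<open>Linear algebra over R^Q, with the state set Q being the finite type 'n.\<close>

definition charvec :: "'n::finite set \<Rightarrow> real^'n" where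
  "charvec K = (\<chi> i. if i \<in> K then 1 else 0)"

definition word_matrix :: "('n::finite \<Rightarrow> 'a \<Rightarrow> 'n) \<Rightarrow> 'a list \<Rightarrow> real^'n^'n" where
  "word_matrix \<delta> w = (\<chi> p q. if run \<delta> p w = q then 1 else 0)"

definition dist_matrix :: "('n::finite \<Rightarrow> 'a \<Rightarrow> 'n) \<Rightarrow> 'a list set \<Rightarrow> ('a list \<Rightarrow> real) \<Rightarrow> real^'n^'n" where
  "dist_matrix \<delta> W P = (\<Sum>w\<in>W. P w *\<^sub>R word_matrix \<delta> w)"

definition V_sub :: "'n::finite set \<Rightarrow> (real^'n) set" where
  "V_sub S = span ((\<lambda>p. charvec {p}) ` S)"

definition complete_for :: "('n::finite \<Rightarrow> 'a \<Rightarrow> 'n) \<Rightarrow> 'a list set \<Rightarrow> (real^'n) set \<Rightarrow> real^'n \<Rightarrow> bool" where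
  "complete_for \<delta> W V g \<longleftrightarrow> span ((\<lambda>w. g v* word_matrix \<delta> w) ` W) = V"

definition DS :: "real^'n::finite \<Rightarrow> nat" where
  "DS g = card {g \<bullet> z | z. \<forall>i. z $ i \<in> {0, 1}} - 1"

definition prob_dist_pos :: "'b set \<Rightarrow> ('b \<Rightarrow> real) \<Rightarrow> bool" where
  "prob_dist_pos W P \<longleftrightarrow> (\<forall>w\<in>W. P w > 0) \<and> (\<Sum>w\<in>W. P w) = 1"

end

theory Submission
  imports Defs
begin


lemma run_append: "run \<delta> q (u@v) = run \<delta> (run \<delta> q u) v"
  by (simp add: run_def)
lemma run_Nil[simp]: "run \<delta> q [] = q" by (simp add: run_def)
lemma run_Cons[simp]: "run \<delta> q (a#v) = run \<delta> (\<delta> q a) v" by (simp add: run_def)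

lemma vm_word: "(y v* word_matrix \<delta> w) $ j = (\<Sum>i\<in>UNIV. if run \<delta> i w = j then y$i else 0)"
  by (simp add: vector_matrix_mult_def word_matrix_def if_distrib cong: if_cong)

lemma dot_vm_word: "x \<bullet> (y v* word_matrix \<delta> w) = (\<Sum>i\<in>UNIV. y$i * x$(run \<delta> i w))"
proof -
  have "x \<bullet> (y v* word_matrix \<delta> w) = (\<Sum>j\<in>UNIV. x$j * (\<Sum>i\<in>UNIV. if run \<delta> i w = j then y$i else 0))"
    by (simp add: inner_vec_def vm_word)
  also have "\<dots> = (\<Sum>j\<in>UNIV. \<Sum>i\<in>UNIV. if run \<delta> i w = j then y$i * x$j else 0)"
    by (simp add: sum_distrib_left if_distrib mult.commute cong: if_cong)
  also have "\<dots> = (\<Sum>i\<in>UNIV. \<Sum>j\<in>UNIV. if run \<delta> i w = j then y$i * x$j else 0)"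
    by (rule sum.swap)
  also have "\<dots> = (\<Sum>i\<in>UNIV. y$i * x$(run \<delta> i w))"
    by (simp add: sum.delta)
  finally show ?thesis .
qed

lemma vm_dist: "y v* dist_matrix \<delta> W P = (\<Sum>w\<in>W. P w *\<^sub>R (y v* word_matrix \<delta> w))"
  by (simp add: vec_eq_iff vector_matrix_mult_def dist_matrix_def sum_component sum_distrib_left
      sum.swap[of _ UNIV W] mult.left_commute)

lemma vm_sum: "(\<Sum>w\<in>W. c w *\<^sub>R y w) v* (M::real^'n::finite^'n) = (\<Sum>w\<in>W. c w *\<^sub>R (y w v* M))"
proof -
  { fix j
    have "((\<Sum>w\<in>W. c w *\<^sub>R y w) v* M) $ j = (\<Sum>i\<in>UNIV. \<Sum>w\<in>W. c w * (y w $ i * M$i$j))"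
      by (simp add: vector_matrix_mult_def sum_component sum_distrib_right mult.assoc)
    also have "\<dots> = (\<Sum>w\<in>W. \<Sum>i\<in>UNIV. c w * (y w $ i * M$i$j))" by (rule sum.swap)
    also have "\<dots> = (\<Sum>w\<in>W. c w *\<^sub>R (y w v* M)) $ j"
      by (simp add: vector_matrix_mult_def sum_component sum_distrib_left)
    finally have "((\<Sum>w\<in>W. c w *\<^sub>R y w) v* M) $ j = (\<Sum>w\<in>W. c w *\<^sub>R (y w v* M)) $ j" .
  } then show ?thesis by (simp add: vec_eq_iff)
qed


lemma wm_mult: "word_matrix \<delta> u ** word_matrix \<delta> v = word_matrix \<delta> (u@v)"
proof -
  { fix p q
    have "(word_matrix \<delta> u ** word_matrix \<delta> v) $ p $ q =
       (\<Sum>k\<in>UNIV. if run \<delta> p u = k then (if run \<delta> k v = q then 1 else 0) else (0::real))"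
      unfolding matrix_matrix_mult_def word_matrix_def by (simp add: if_distrib[of "\<lambda>x. x * _"] cong: if_cong)
    also have "\<dots> = (if run \<delta> (run \<delta> p u) v = q then 1 else 0)"
      by (simp only: sum.delta' finite UNIV_I if_True)
    finally have "(word_matrix \<delta> u ** word_matrix \<delta> v) $ p $ q = word_matrix \<delta> (u@v) $ p $ q"
      by (simp add: word_matrix_def run_append)
  } then show ?thesis by (simp add: vec_eq_iff)
qed

lemma vm_comp: "(y v* word_matrix \<delta> u) v* word_matrix \<delta> v = y v* word_matrix \<delta> (u@v)"
  by (simp add: vector_matrix_mul_assoc wm_mult)

lemma charvec_comp[simp]: "charvec S $ i = (if i \<in> S then 1 else 0)"
  by (simp add: charvec_def)

lemma dot_charvec: "charvec S \<bullet> y = (\<Sum>i\<in>S. y$i)"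
proof -
  have "charvec S \<bullet> y = (\<Sum>i\<in>UNIV. if i \<in> S then y$i else 0)"
    unfolding inner_vec_def by (rule sum.cong) auto
  also have "\<dots> = (\<Sum>i\<in>S. y$i)" by (simp add: sum.If_cases)
  finally show ?thesis .
qed

lemma V_sub_zero: assumes "x \<in> V_sub R" "i \<notin> R" shows "x $ i = 0"
proof -
  have "subspace {x::real^'a. \<forall>i. i \<notin> R \<longrightarrow> x$i = 0}"
    by (auto simp: subspace_def)
  moreover have "(\<lambda>p. charvec {p}) ` R \<subseteq> {x::real^'a. \<forall>i. i \<notin> R \<longrightarrow> x$i = 0}"
    by auto
  ultimately have "V_sub R \<subseteq> {x::real^'a. \<forall>i. i \<notin> R \<longrightarrow> x$i = 0}"
    unfolding V_sub_def by (rule span_minimal[rotated])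
  with assms show ?thesis by auto
qed

lemma charvec_sum: "charvec A = (\<Sum>p\<in>A. charvec {p})"
  by (simp add: vec_eq_iff sum_component charvec_def sum.delta)

lemma charvec_V_sub: "A \<subseteq> R \<Longrightarrow> charvec A \<in> V_sub R"
  unfolding V_sub_def
  by (subst charvec_sum, rule span_sum) (auto intro: span_base)

lemma finite_words_upto: "finite \<Sigma> \<Longrightarrow> finite (words_upto \<Sigma> c)"
  unfolding words_upto_def by (rule finite_lists_length_le)

lemma runB: "run (run \<delta>) i v = run \<delta> i (concat v)"
  by (induction v arbitrary: i) (simp_all add: run_append)




locale thm1 =
  fixes \<Sigma> :: "'a set" and \<delta> :: "'n::finite \<Rightarrow> 'a \<Rightarrow> 'n"
    and d1 d2 :: nat and W1 W2 :: "'a list set"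
    and P1 P2 :: "'a list \<Rightarrow> real" and \<alpha> :: "real^'n" and w0 :: "'a list"
    and R :: "'n set"
  assumes R_def: "R = {run \<delta> q w | q w. w \<in> W1}"
  assumes fin: "finite \<Sigma>" and ne: "\<Sigma> \<noteq> {}"
    and d1: "d1 > 0" and d2: "d2 > 0"
    and W1: "W1 \<subseteq> words_upto \<Sigma> d1" "W1 \<noteq> {}"
    and W2: "W2 \<subseteq> words_upto \<Sigma> d2" "W2 \<noteq> {}"
    and P1: "prob_dist_pos W1 P1" and P2: "prob_dist_pos W2 P2"
    and \<alpha>V: "\<alpha> \<in> V_sub R"
    and \<alpha>nn: "\<forall>i. \<alpha> $ i \<ge> 0" and \<alpha>sum: "(\<Sum>i\<in>UNIV. \<alpha> $ i) = 1"
    and stat: "(\<alpha> v* dist_matrix \<delta> W2 P2) v* dist_matrix \<delta> W1 P1 = \<alpha>"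
    and compl: "complete_for \<delta> (word_concat W2 W1) (V_sub R) \<alpha>"
    and w0: "set w0 \<subseteq> \<Sigma>" "(\<lambda>q. run \<delta> q w0) ` UNIV = R"
begin

abbreviation "WW \<equiv> word_concat W2 W1"

definition mu :: "'n set \<Rightarrow> real" where "mu S = (\<Sum>i\<in>S. \<alpha>$i)"

lemma finW1: "finite W1" using finite_subset[OF W1(1) finite_words_upto[OF fin]] .
lemma finW2: "finite W2" using finite_subset[OF W2(1) finite_words_upto[OF fin]] .

lemma Rne: "R \<noteq> {}" using W1(2) unfolding R_def by auto

lemma runR: "w \<in> WW \<Longrightarrow> run \<delta> q w \<in> R"
  unfolding word_concat_def R_def by (auto simp: run_append) blast

lemma \<alpha>_out: "i \<notin> R \<Longrightarrow> \<alpha> $ i = 0"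
  using V_sub_zero[OF \<alpha>V] .

lemma P1pos: "w \<in> W1 \<Longrightarrow> P1 w > 0" and P1sum: "(\<Sum>w\<in>W1. P1 w) = 1"
  using P1 by (auto simp: prob_dist_pos_def)
lemma P2pos: "w \<in> W2 \<Longrightarrow> P2 w > 0" and P2sum: "(\<Sum>w\<in>W2. P2 w) = 1"
  using P2 by (auto simp: prob_dist_pos_def)

lemma stat_dot: "x \<bullet> \<alpha> = (\<Sum>w2\<in>W2. \<Sum>w1\<in>W1. P2 w2 * P1 w1 * (x \<bullet> (\<alpha> v* word_matrix \<delta> (w2@w1))))"
proof -
  have "x \<bullet> \<alpha> = x \<bullet> ((\<alpha> v* dist_matrix \<delta> W2 P2) v* dist_matrix \<delta> W1 P1)" using stat by simp
  also have "\<dots> = x \<bullet> (\<Sum>w1\<in>W1. P1 w1 *\<^sub>R (\<Sum>w2\<in>W2. P2 w2 *\<^sub>R (\<alpha> v* word_matrix \<delta> (w2@w1))))"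
    by (simp add: vm_dist vm_sum vm_comp)
  also have "\<dots> = (\<Sum>w1\<in>W1. \<Sum>w2\<in>W2. P2 w2 * P1 w1 * (x \<bullet> (\<alpha> v* word_matrix \<delta> (w2@w1))))"
    by (simp add: inner_sum_right sum_distrib_left mult_ac)
  also have "\<dots> = (\<Sum>w2\<in>W2. \<Sum>w1\<in>W1. P2 w2 * P1 w1 * (x \<bullet> (\<alpha> v* word_matrix \<delta> (w2@w1))))"
    by (rule sum.swap)
  finally show ?thesis .
qed

lemma dot_charvec_word: "charvec S \<bullet> (\<alpha> v* word_matrix \<delta> w) = mu {i. run \<delta> i w \<in> S}"
  unfolding dot_vm_word mu_def by (simp add: sum.If_cases if_distrib[of "\<lambda>x. _ * x"] cong: if_cong)

lemma charvecR_word: "w \<in> WW \<Longrightarrow> charvec R \<bullet> (\<alpha> v* word_matrix \<delta> w) = 1"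
  using runR \<alpha>sum by (simp add: dot_charvec_word mu_def)

lemma part1:
  assumes xV: "x \<in> V_sub R" and xn: "x \<notin> span {charvec R}"
  shows "\<exists>w\<in>WW. x \<bullet> (\<alpha> v* word_matrix \<delta> w) > x \<bullet> \<alpha>"
proof (rule ccontr)
  assume "\<not> ?thesis"
  hence le: "\<And>w. w \<in> WW \<Longrightarrow> x \<bullet> (\<alpha> v* word_matrix \<delta> w) \<le> x \<bullet> \<alpha>" by force
  define c where "c = x \<bullet> \<alpha>"
  define g where "g w = x \<bullet> (\<alpha> v* word_matrix \<delta> w)" for w
  have inWW: "w2 \<in> W2 \<Longrightarrow> w1 \<in> W1 \<Longrightarrow> w2 @ w1 \<in> WW" for w2 w1
    unfolding word_concat_def by blast
  have "(\<Sum>w2\<in>W2. \<Sum>w1\<in>W1. P2 w2 * P1 w1 * (c - g (w2@w1)))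
      = c * ((\<Sum>w2\<in>W2. P2 w2) * (\<Sum>w1\<in>W1. P1 w1)) - (\<Sum>w2\<in>W2. \<Sum>w1\<in>W1. P2 w2 * P1 w1 * g (w2@w1))"
    by (simp add: right_diff_distrib sum_subtractf sum_distrib_left sum_distrib_right sum_product mult_ac)
  also have "\<dots> = 0" using stat_dot[of x] P1sum P2sum by (simp add: c_def g_def)
  finally have z: "(\<Sum>w2\<in>W2. \<Sum>w1\<in>W1. P2 w2 * P1 w1 * (c - g (w2@w1))) = 0" .
  have nn: "w2 \<in> W2 \<Longrightarrow> w1 \<in> W1 \<Longrightarrow> 0 \<le> P2 w2 * P1 w1 * (c - g (w2@w1))" for w2 w1
    using le[OF inWW] P1pos P2pos by (simp add: c_def g_def less_imp_le)
  have eq: "g w = c" if "w \<in> WW" for w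
  proof -
    from that obtain w2 w1 where w: "w = w2 @ w1" "w2 \<in> W2" "w1 \<in> W1"
      unfolding word_concat_def by blast
    have "(\<Sum>w1\<in>W1. P2 w2 * P1 w1 * (c - g (w2@w1))) = 0"
      using z w(2) finW2 finW1 nn by (subst (asm) sum_nonneg_eq_0_iff) (auto intro: sum_nonneg)
    hence "P2 w2 * P1 w1 * (c - g (w2@w1)) = 0"
      using w(2,3) finW1 nn by (subst (asm) sum_nonneg_eq_0_iff) auto
    thus ?thesis using P1pos[OF w(3)] P2pos[OF w(2)] w(1) by simp
  qed
  define y where "y = x - c *\<^sub>R charvec R"
  have yV: "y \<in> V_sub R" unfolding y_def
    using xV charvec_V_sub[of R R] unfolding V_sub_def
    by (intro span_diff span_scale) auto
  have orth: "orthogonal y z" if "z \<in> (\<lambda>w. \<alpha> v* word_matrix \<delta> w) ` WW" for z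
  proof -
    from that obtain w where w: "w \<in> WW" "z = \<alpha> v* word_matrix \<delta> w" by blast
    have "y \<bullet> z = g w - c * (charvec R \<bullet> z)" unfolding y_def g_def w(2)
      by (simp add: inner_diff_left)
    also have "\<dots> = 0" using eq[OF w(1)] charvecR_word[OF w(1)] w(2) by simp
    finally show ?thesis by (simp add: orthogonal_def)
  qed
  have "y \<in> span ((\<lambda>w. \<alpha> v* word_matrix \<delta> w) ` WW)"
    using compl yV unfolding complete_for_def by simp
  from orthogonal_to_span[OF this orth] have "y = 0" by (simp add: orthogonal_def)
  hence "x = c *\<^sub>R charvec R" unfolding y_def by simp
  hence "x \<in> span {charvec R}" by (simp add: span_base span_scale)
  with xn show False by simp
qed

definition "D = range mu"

lemma finD: "finite D" unfolding D_def by simp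

lemma mu_nn: "mu S \<ge> 0" unfolding mu_def using \<alpha>nn by (simp add: sum_nonneg)

lemma DS_eq: "DS \<alpha> = card D - 1"
proof -
  have "{\<alpha> \<bullet> z | z. \<forall>i. z $ i \<in> {0, 1}} = D"
  proof (intro equalityI subsetI)
    fix d assume "d \<in> {\<alpha> \<bullet> z | z. \<forall>i. z $ i \<in> {0, 1}}"
    then obtain z where z: "d = \<alpha> \<bullet> z" "\<forall>i. z $ i \<in> {0, 1}" by blast
    have "z = charvec {i. z$i = 1}" using z(2) by (auto simp: vec_eq_iff)
    hence "d = mu {i. z$i = 1}" using z(1) by (metis dot_charvec inner_commute mu_def)
    thus "d \<in> D" unfolding D_def by simp
  next
    fix d assume "d \<in> D"
    then obtain S where "d = mu S" unfolding D_def by blast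
    hence "d = \<alpha> \<bullet> charvec S" by (metis dot_charvec inner_commute mu_def)
    moreover have "\<forall>i. charvec S $ i \<in> {0,1}" by simp
    ultimately show "d \<in> {\<alpha> \<bullet> z | z. \<forall>i. z $ i \<in> {0, 1}}" by blast
  qed
  thus ?thesis unfolding DS_def by simp
qed

lemma chain:
  assumes "T \<inter> R \<noteq> {}"
  shows "\<exists>v. set v \<subseteq> WW \<and> R \<subseteq> {i. run (run \<delta>) i v \<in> T} \<and> length v \<le> card {d\<in>D. d > mu T}"
  using assms
proof (induction "card {d\<in>D. d > mu T}" arbitrary: T rule: less_induct)
  case less
  show ?case
  proof (cases "R \<subseteq> T")
    case True
    then show ?thesis by (intro exI[of _ "[]"]) auto
  next
    case False
    define x where "x = charvec (T \<inter> R)"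
    have xV: "x \<in> V_sub R" unfolding x_def by (rule charvec_V_sub) auto
    have xn: "x \<notin> span {charvec R}"
    proof
      assume "x \<in> span {charvec R}"
      then obtain c where c: "x = c *\<^sub>R charvec R" by (auto simp: span_singleton)
      obtain i where i: "i \<in> T" "i \<in> R" using less.prems by blast
      obtain j where j: "j \<notin> T" "j \<in> R" using False by blast
      have "x $ i = 1" "x $ j = 0" using i j by (simp_all add: x_def)
      moreover have "x $ i = c" "x $ j = c" using c i j by simp_all
      ultimately show False by simp
    qed
    obtain w where w: "w \<in> WW" "x \<bullet> (\<alpha> v* word_matrix \<delta> w) > x \<bullet> \<alpha>"
      using part1[OF xV xn] by blast
    define T' where "T' = {i. run \<delta> i w \<in> T}"
    have "x \<bullet> \<alpha> = mu (T \<inter> R)" unfolding x_def mu_def by (simp add: dot_charvec)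
    also have "\<dots> = mu T" unfolding mu_def
      by (rule sum.mono_neutral_left) (auto simp: \<alpha>_out)
    finally have e1: "x \<bullet> \<alpha> = mu T" .
    have "x \<bullet> (\<alpha> v* word_matrix \<delta> w) = mu {i. run \<delta> i w \<in> T \<inter> R}"
      unfolding x_def by (rule dot_charvec_word)
    also have "{i. run \<delta> i w \<in> T \<inter> R} = T'" using runR[OF w(1)] by (auto simp: T'_def)
    finally have e2: "x \<bullet> (\<alpha> v* word_matrix \<delta> w) = mu T'" .
    have gt: "mu T' > mu T" using w(2) e1 e2 by simp
    have "T' \<inter> R \<noteq> {}"
    proof
      assume "T' \<inter> R = {}"
      hence "mu T' = 0" unfolding mu_def by (intro sum.neutral) (blast intro: \<alpha>_out)
      with gt mu_nn[of T] show False by simp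
    qed
    moreover have "card {d\<in>D. d > mu T'} < card {d\<in>D. d > mu T}"
    proof (rule psubset_card_mono)
      show "finite {d\<in>D. d > mu T}" using finD by simp
      show "{d\<in>D. d > mu T'} \<subset> {d\<in>D. d > mu T}"
      proof
        show "{d\<in>D. d > mu T'} \<subseteq> {d\<in>D. d > mu T}" using gt by auto
        have "mu T' \<in> {d\<in>D. d > mu T}" using gt by (simp add: D_def)
        thus "{d\<in>D. d > mu T'} \<noteq> {d\<in>D. d > mu T}" by auto
      qed
    qed
    ultimately obtain v' where v': "set v' \<subseteq> WW" "R \<subseteq> {i. run (run \<delta>) i v' \<in> T'}"
      "length v' \<le> card {d\<in>D. d > mu T'}"
      using less.hyps by blast
    show ?thesis
    proof (intro exI[of _ "v' @ [w]"] conjI)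
      show "set (v' @ [w]) \<subseteq> WW" using v'(1) w(1) by simp
      show "R \<subseteq> {i. run (run \<delta>) i (v' @ [w]) \<in> T}"
        using v'(2) by (auto simp: run_append T'_def)
      show "length (v' @ [w]) \<le> card {d\<in>D. d > mu T}"
        using v'(3) \<open>card {d\<in>D. d > mu T'} < card {d\<in>D. d > mu T}\<close> by simp
    qed
  qed
qed

lemma card_gt_bound:
  assumes "E \<subseteq> D" "finite E" and that: "\<forall>e\<in>E. \<not> e > m"
  shows "card {d\<in>D. d > m} \<le> card D - card E"
proof -
  have "{d\<in>D. d > m} \<subseteq> D - E" using that by auto
  hence "card {d\<in>D. d > m} \<le> card (D - E)" using finD by (intro card_mono) auto
  also have "\<dots> = card D - card E" using assms by (simp add: card_Diff_subset)
  finally show ?thesis .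
qed

lemma concat_WW: "set v \<subseteq> WW \<Longrightarrow> set (concat v) \<subseteq> \<Sigma> \<and> length (concat v) \<le> length v * (d1+d2)"
proof (induction v)
  case Nil then show ?case by simp
next
  case (Cons w v)
  then obtain w2 w1 where w: "w = w2 @ w1" "w2 \<in> W2" "w1 \<in> W1" unfolding word_concat_def by auto
  have "set w2 \<subseteq> \<Sigma>" "length w2 \<le> d2" using W2(1) w(2) by (auto simp: words_upto_def)
  moreover have "set w1 \<subseteq> \<Sigma>" "length w1 \<le> d1" using W1(1) w(3) by (auto simp: words_upto_def)
  ultimately show ?case using Cons w(1) by auto
qed

lemma exists_pos: "\<exists>q. \<alpha>$q > 0"
proof (rule ccontr)
  assume "\<not> ?thesis"
  hence "\<forall>i. \<alpha>$i = 0" using \<alpha>nn by (metis less_eq_real_def)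
  with \<alpha>sum show False by simp
qed

lemma partB: "\<exists>v. is_reset_word R WW (run \<delta>) v \<and> length v \<le> DS \<alpha> - 1"
proof -
  obtain q where q: "\<alpha>$q > 0" using exists_pos by blast
  have qR: "q \<in> R" using q \<alpha>_out by force
  obtain v where v: "set v \<subseteq> WW" "R \<subseteq> {i. run (run \<delta>) i v \<in> {q}}"
    "length v \<le> card {d\<in>D. d > mu {q}}"
    using chain[of "{q}"] qR by auto
  have muq: "mu {q} = \<alpha>$q" by (simp add: mu_def)
  have "card {d\<in>D. d > mu {q}} \<le> card D - card {0, \<alpha>$q}"
  proof (rule card_gt_bound)
    have "0 = mu {}" by (simp add: mu_def)
    then show "{0, \<alpha>$q} \<subseteq> D" unfolding D_def using muq by (metis empty_subsetI insert_subset rangeI)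
  qed (use q muq in auto)
  also have "card {0, \<alpha>$q} = 2" using q by simp
  finally have "length v \<le> DS \<alpha> - 1" using v(3) DS_eq by simp
  moreover have "(\<lambda>i. run (run \<delta>) i v) ` R = {q}" using v(2) Rne by auto
  ultimately show ?thesis using v(1) by (intro exI[of _ v]) (simp add: is_reset_word_def)
qed

lemma posR: assumes "r \<in> R" shows "\<alpha>$r > 0"
proof (rule ccontr)
  assume "\<not> ?thesis"
  hence r0: "\<alpha>$r = 0" using \<alpha>nn by (metis less_eq_real_def)
  have comp_nn: "(\<alpha> v* word_matrix \<delta> w) $ r \<ge> 0" for w
    unfolding vm_word using \<alpha>nn by (auto intro: sum_nonneg)
  have "\<exists>w\<in>WW. (\<alpha> v* word_matrix \<delta> w) $ r \<noteq> 0"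
  proof (rule ccontr)
    assume "\<not> ?thesis"
    hence "(\<lambda>w. \<alpha> v* word_matrix \<delta> w) ` WW \<subseteq> {y. y $ r = 0}" by auto
    moreover have "subspace {y::real^'n. y $ r = 0}" by (auto simp: subspace_def)
    ultimately have "span ((\<lambda>w. \<alpha> v* word_matrix \<delta> w) ` WW) \<subseteq> {y. y $ r = 0}"
      by (rule span_minimal)
    moreover have "charvec {r} \<in> V_sub R" using assms by (intro charvec_V_sub) auto
    ultimately show False using compl unfolding complete_for_def by auto
  qed
  then obtain w where w: "w \<in> WW" "(\<alpha> v* word_matrix \<delta> w) $ r > 0"
    using comp_nn by (metis less_eq_real_def)
  then obtain w2 w1 where ww: "w = w2 @ w1" "w2 \<in> W2" "w1 \<in> W1" unfolding word_concat_def by auto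
  define f where "f w2 w1 = P2 w2 * P1 w1 * (charvec {r} \<bullet> (\<alpha> v* word_matrix \<delta> (w2@w1)))" for w2 w1
  have fnn: "w2 \<in> W2 \<Longrightarrow> w1 \<in> W1 \<Longrightarrow> f w2 w1 \<ge> 0" for w2 w1
    unfolding f_def using P1pos P2pos comp_nn by (simp add: dot_charvec less_imp_le)
  have "f w2 w1 > 0" unfolding f_def using P1pos[OF ww(3)] P2pos[OF ww(2)] w(2) ww(1)
    by (simp add: dot_charvec)
  also have "f w2 w1 \<le> (\<Sum>w1'\<in>W1. f w2 w1')"
    using finW1 ww(3) fnn[OF ww(2)] by (intro member_le_sum) auto
  also have "\<dots> \<le> (\<Sum>w2'\<in>W2. \<Sum>w1'\<in>W1. f w2' w1')"
    using finW2 ww(2) fnn by (intro member_le_sum[where f="\<lambda>w2'. \<Sum>w1'\<in>W1. f w2' w1'"] sum_nonneg) auto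
  also have "\<dots> = charvec {r} \<bullet> \<alpha>" unfolding f_def by (rule stat_dot[symmetric])
  also have "\<dots> = 0" using r0 by (simp add: dot_charvec)
  finally show False by simp
qed

lemma inj_run: "(\<forall>a\<in>\<Sigma>. inj (\<lambda>i. \<delta> i a)) \<Longrightarrow> set u \<subseteq> \<Sigma> \<Longrightarrow> inj (\<lambda>i. run \<delta> i u)"
proof (induction u)
  case Nil then show ?case by (simp add: inj_on_def)
next
  case (Cons a u)
  then have "inj (\<lambda>i. \<delta> i a)" "inj (\<lambda>i. run \<delta> i u)" by auto
  then have "inj ((\<lambda>i. run \<delta> i u) \<circ> (\<lambda>i. \<delta> i a))" by (intro inj_compose)
  then show ?case by (simp add: comp_def)
qed

lemma partA_UNIV:
  assumes RU: "R = UNIV" and c2: "CARD('n) \<ge> 2"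
  shows "\<exists>u. is_reset_word UNIV \<Sigma> \<delta> u \<and> length u \<le> 1 + (DS \<alpha> - 2) * (d1 + d2)"
proof -
  obtain v0 where v0: "is_reset_word R WW (run \<delta>) v0" using partB by blast
  have "\<exists>a\<in>\<Sigma>. \<not> inj (\<lambda>i. \<delta> i a)"
  proof (rule ccontr)
    assume "\<not> ?thesis"
    hence allinj: "\<forall>a\<in>\<Sigma>. inj (\<lambda>i. \<delta> i a)" by blast
    have "set (concat v0) \<subseteq> \<Sigma>" using v0 concat_WW by (auto simp: is_reset_word_def)
    from inj_run[OF allinj this] have "inj (\<lambda>i. run \<delta> i (concat v0))" .
    hence "card ((\<lambda>i. run \<delta> i (concat v0)) ` UNIV) = CARD('n)" by (simp add: card_image)
    moreover have "card ((\<lambda>i. run \<delta> i (concat v0)) ` UNIV) = 1"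
      using v0 RU by (simp add: is_reset_word_def runB)
    ultimately show False using c2 by simp
  qed
  then obtain a p r where a: "a \<in> \<Sigma>" "p \<noteq> r" "\<delta> p a = \<delta> r a"
    by (auto simp: inj_on_def)
  define T0 where "T0 = {i. \<delta> i a = \<delta> p a}"
  have pr: "p \<in> T0" "r \<in> T0" using a by (auto simp: T0_def)
  obtain v where v: "set v \<subseteq> WW" "R \<subseteq> {i. run (run \<delta>) i v \<in> T0}"
    "length v \<le> card {d\<in>D. d > mu T0}"
    using chain[of T0] pr RU by auto
  have ap: "\<alpha>$p > 0" "\<alpha>$r > 0" using posR RU by auto
  have "mu {p, r} \<le> mu T0" unfolding mu_def using pr \<alpha>nn by (intro sum_mono2) auto
  hence muT0: "\<alpha>$p + \<alpha>$r \<le> mu T0" using a(2) by (simp add: mu_def)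
  have sub: "{0, \<alpha>$p, mu T0} \<subseteq> D"
  proof -
    have "0 = mu {}" "\<alpha>$p = mu {p}" by (simp_all add: mu_def)
    then show "{0, \<alpha>$p, mu T0} \<subseteq> D" unfolding D_def by (metis empty_subsetI insert_subset rangeI)
  qed
  have lt: "\<forall>e\<in>{0, \<alpha>$p, mu T0}. \<not> e > mu T0" using ap muT0 by auto
  have "card {d\<in>D. d > mu T0} \<le> card D - card {0, \<alpha>$p, mu T0}"
    by (rule card_gt_bound[OF sub _ lt]) simp
  also have "card {0, \<alpha>$p, mu T0} = 3" using ap muT0 by auto
  finally have lv: "length v \<le> DS \<alpha> - 2" using v(3) DS_eq by simp
  define u where "u = concat v @ [a]"
  have cv: "set (concat v) \<subseteq> \<Sigma>" "length (concat v) \<le> length v * (d1+d2)" using concat_WW[OF v(1)] by auto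
  have all: "run \<delta> i u = \<delta> p a" for i
    using v(2) RU by (auto simp: u_def run_append runB T0_def)
  hence "(\<lambda>i. run \<delta> i u) ` UNIV = {\<delta> p a}" by auto
  hence "is_reset_word UNIV \<Sigma> \<delta> u" using cv a(1) by (simp add: is_reset_word_def u_def)
  moreover have "length u \<le> 1 + (DS \<alpha> - 2) * (d1 + d2)"
  proof -
    have "length v * (d1+d2) \<le> (DS \<alpha> - 2) * (d1+d2)" using lv by (rule mult_right_mono) simp
    thus ?thesis using cv(2) unfolding u_def by (simp only: length_append list.size)
  qed
  ultimately show ?thesis by blast
qed

end

theorem theorem1:
  fixes \<Sigma> :: "'a set" and \<delta> :: "'n::finite \<Rightarrow> 'a \<Rightarrow> 'n"
    and d1 d2 :: nat and W1 W2 :: "'a list set"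
    and P1 P2 :: "'a list \<Rightarrow> real" and \<alpha> :: "real^'n" and w0 :: "'a list"
  defines "R \<equiv> {run \<delta> q w | q w. w \<in> W1}"
  defines "\<delta>B \<equiv> (\<lambda>q w. run \<delta> q w)"
  assumes fin: "finite \<Sigma>" and ne: "\<Sigma> \<noteq> {}"
    and d1: "d1 > 0" and d2: "d2 > 0"
    and W1: "W1 \<subseteq> words_upto \<Sigma> d1" "W1 \<noteq> {}"
    and W2: "W2 \<subseteq> words_upto \<Sigma> d2" "W2 \<noteq> {}"
    and P1: "prob_dist_pos W1 P1" and P2: "prob_dist_pos W2 P2"
    and \<alpha>V: "\<alpha> \<in> V_sub R"
    and \<alpha>nn: "\<forall>i. \<alpha> $ i \<ge> 0" and \<alpha>sum: "(\<Sum>i\<in>UNIV. \<alpha> $ i) = 1"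
    and stat: "(\<alpha> v* dist_matrix \<delta> W2 P2) v* dist_matrix \<delta> W1 P1 = \<alpha>"
    and compl: "complete_for \<delta> (word_concat W2 W1) (V_sub R) \<alpha>"
    and w0: "set w0 \<subseteq> \<Sigma>" "(\<lambda>q. run \<delta> q w0) ` UNIV = R"
  shows "(\<forall>x \<in> V_sub R - span {charvec R}.
            \<exists>w \<in> word_concat W2 W1. x \<bullet> (\<alpha> v* word_matrix \<delta> w) > x \<bullet> \<alpha>)
       \<and> synchronizing R (word_concat W2 W1) \<delta>B
       \<and> reset_threshold R (word_concat W2 W1) \<delta>B \<le> DS \<alpha> - 1
       \<and> synchronizing UNIV \<Sigma> \<delta>
       \<and> (R \<noteq> UNIV \<longrightarrow>
            reset_threshold UNIV \<Sigma> \<delta> \<le> length w0 + reset_threshold R (word_concat W2 W1) \<delta>B * (d1 + d2)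
          \<and> length w0 + reset_threshold R (word_concat W2 W1) \<delta>B * (d1 + d2) \<le> length w0 + (DS \<alpha> - 1) * (d1 + d2))
       \<and> (R = UNIV \<longrightarrow> reset_threshold UNIV \<Sigma> \<delta> \<le> 1 + (DS \<alpha> - 2) * (d1 + d2))"
  proof -
  interpret L: thm1 \<Sigma> \<delta> d1 d2 W1 W2 P1 P2 \<alpha> w0 R
    by unfold_locales (use fin ne d1 d2 W1 W2 P1 P2 \<alpha>V \<alpha>nn \<alpha>sum stat compl w0 in \<open>simp_all add: R_def\<close>)
  have dB: "\<delta>B = run \<delta>" unfolding \<delta>B_def by (intro ext) simp
  obtain vB where vB: "is_reset_word R (word_concat W2 W1) (run \<delta>) vB" "length vB \<le> DS \<alpha> - 1"
    using L.partB by blast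
  have syncB: "synchronizing R (word_concat W2 W1) \<delta>B"
    unfolding synchronizing_def dB using vB by blast
  have rtB: "reset_threshold R (word_concat W2 W1) \<delta>B \<le> DS \<alpha> - 1"
  proof -
    have "reset_threshold R (word_concat W2 W1) \<delta>B \<le> length vB"
      unfolding reset_threshold_def dB using vB(1) by (intro Least_le) blast
    thus ?thesis using vB(2) by simp
  qed
  have "\<exists>k w. is_reset_word R (word_concat W2 W1) (run \<delta>) w \<and> length w = k" using vB by blast
  from LeastI_ex[OF this] obtain vm where vm: "is_reset_word R (word_concat W2 W1) (run \<delta>) vm"
    "length vm = reset_threshold R (word_concat W2 W1) \<delta>B"
    unfolding reset_threshold_def dB by blast
  define u where "u = w0 @ concat vm"
  have cv: "set (concat vm) \<subseteq> \<Sigma>" "length (concat vm) \<le> length vm * (d1+d2)"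
    using L.concat_WW vm(1) by (auto simp: is_reset_word_def)
  have "(\<lambda>i. run \<delta> i u) ` UNIV = (\<lambda>j. run (run \<delta>) j vm) ` ((\<lambda>i. run \<delta> i w0) ` UNIV)"
    by (simp add: u_def image_image run_append runB)
  also have "\<dots> = (\<lambda>j. run (run \<delta>) j vm) ` R" using w0(2) by simp
  finally have "card ((\<lambda>i. run \<delta> i u) ` UNIV) = 1" using vm(1) by (simp add: is_reset_word_def)
  hence uA: "is_reset_word UNIV \<Sigma> \<delta> u" using cv w0(1) by (simp add: is_reset_word_def u_def)
  have syncA: "synchronizing UNIV \<Sigma> \<delta>" unfolding synchronizing_def using uA by blast
  have rtA: "reset_threshold UNIV \<Sigma> \<delta> \<le> length w0 + reset_threshold R (word_concat W2 W1) \<delta>B * (d1 + d2)"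
  proof -
    have "reset_threshold UNIV \<Sigma> \<delta> \<le> length u"
      unfolding reset_threshold_def using uA by (intro Least_le) blast
    thus ?thesis using cv(2) vm(2) by (simp add: u_def)
  qed
  have rt2: "length w0 + reset_threshold R (word_concat W2 W1) \<delta>B * (d1 + d2) \<le> length w0 + (DS \<alpha> - 1) * (d1 + d2)"
    using rtB by simp
  have rtU: "reset_threshold UNIV \<Sigma> \<delta> \<le> 1 + (DS \<alpha> - 2) * (d1 + d2)" if RU: "R = UNIV"
  proof (cases "CARD('n) \<ge> 2")
    case True
    then obtain u' where u': "is_reset_word UNIV \<Sigma> \<delta> u'" "length u' \<le> 1 + (DS \<alpha> - 2) * (d1 + d2)"
      using L.partA_UNIV[OF RU] by blast
    have "reset_threshold UNIV \<Sigma> \<delta> \<le> length u'"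
      unfolding reset_threshold_def using u'(1) by (intro Least_le) blast
    thus ?thesis using u'(2) by simp
  next
    case False
    hence "CARD('n) = 1" using zero_less_card_finite[where 'a='n] by linarith
    hence "is_reset_word UNIV \<Sigma> \<delta> []" by (simp add: is_reset_word_def)
    hence "reset_threshold UNIV \<Sigma> \<delta> \<le> 0"
      unfolding reset_threshold_def by (intro Least_le) force
    thus ?thesis by simp
  qed
  show ?thesis using L.part1 syncB rtB syncA rtA rt2 rtU by blast
qed

end
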